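(* Let $p$ be a binary word of length $l\ge1$ with $r$ runs. For every $n\ge 0$, $$B_{n,p}(1)=\binom{n-r+1}{l-r+1}.$$
   Context: Binary words, occurrences, $c_p(w)$ (number of occurrences of $p$ as a subsequence of $w$, i.e. number of index tuples $i_1<\cdots<i_l$ with $w_{i_1}\cdots w_{i_l}=p$) and $B_{n,p}(k)=\#\{w\in\{0,1\}^n: c_p(w)=k\}$. A run of a word is a maximal block of consecutive equal letters; its size is its length. Convention: $\binom{a}{b}=0$ unless $0\le b\le a$. *)

theory Defs
  imports Main
begin

definition occ :: "bool list \<Rightarrow> bool list \<Rightarrow> nat" where
  "occ p w = card {I. I \<subseteq> {..<length w} \<and> card I = length p \<and> nths w I = p}"

definition B :: "nat \<Rightarrow> bool list \<Rightarrow> nat \<Rightarrow> nat" where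
  "B n p k = card {w. length w = n \<and> occ p w = k}"

definition runs :: "bool list \<Rightarrow> nat" where
  "runs p = length (remdups_adj p)"

end

theory Submission imports Defs begin

lemma occ_Nil: "occ [] w = 1"
proof -
  have "{I. I \<subseteq> {..<length w} \<and> card I = length ([]::bool list) \<and> nths w I = []} = {{}}"
    by (auto, metis card_0_eq empty_iff finite_lessThan finite_subset)
  then show ?thesis unfolding occ_def by simp
qed

lemma occ_Cons_Nil: "occ (a#p) [] = 0"
  unfolding occ_def by simp

lemma decomp_idx:
  assumes "I \<subseteq> {..<Suc n}"
  shows "{j. Suc j \<in> I} \<subseteq> {..<n}"
    and "0 \<notin> I \<Longrightarrow> I = Suc ` {j. Suc j \<in> I}"
    and "0 \<in> I \<Longrightarrow> I = insert 0 (Suc ` {j. Suc j \<in> I})"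
  using assms apply auto
  by (metis image_iff mem_Collect_eq not0_implies_Suc)+

lemma occ_Cons_Cons:
  "occ (a#p) (b#w) = occ (a#p) w + (if a = b then occ p w else 0)"
proof -
  define S where "S q v = {I. I \<subseteq> {..<length v} \<and> card I = length q \<and> nths v I = q}" for q :: "bool list" and v :: "bool list"
  have finS: "finite (S q v)" for q v
    by (rule finite_subset[of _ "Pow {..<length v}"]) (auto simp: S_def)
  have injS: "inj_on (image Suc) A" for A :: "nat set set" by (simp add: inj_on_def inj_image_eq_iff)
  define T where "T = (if a = b then (\<lambda>J. insert 0 (Suc ` J)) ` S p w else {})"
  have eq: "S (a#p) (b#w) = (image Suc) ` S (a#p) w \<union> T"
  proof
    show "S (a#p) (b#w) \<subseteq> (image Suc) ` S (a#p) w \<union> T"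
    proof
      fix I assume I: "I \<in> S (a#p) (b#w)"
      define J where "J = {j. Suc j \<in> I}"
      have Isub: "I \<subseteq> {..<Suc (length w)}" using I by (simp add: S_def)
      have Jsub: "J \<subseteq> {..<length w}" using decomp_idx(1)[OF Isub] J_def by simp
      have finJ: "finite J" using Jsub finite_subset by blast
      show "I \<in> (image Suc) ` S (a#p) w \<union> T"
      proof (cases "0 \<in> I")
        case False
        have II: "I = Suc ` J" using decomp_idx(2)[OF Isub False] J_def by simp
        have "card I = card J" using II by (simp add: card_image)
        moreover have "nths (b#w) I = nths w J" using False nths_Cons[of b w I] J_def by simp
        ultimately have "J \<in> S (a#p) w" using I Jsub by (simp add: S_def)
        then show ?thesis using II by blast
      next
        case True
        have II: "I = insert 0 (Suc ` J)" using decomp_idx(3)[OF Isub True] J_def by simp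
        have "card I = Suc (card J)" using II finJ by (simp add: card_image)
        moreover have "nths (b#w) I = b # nths w J" using True nths_Cons[of b w I] J_def by simp
        ultimately have "a = b" "J \<in> S p w" using I Jsub by (auto simp: S_def)
        then have "I \<in> T" using II T_def by simp
        then show ?thesis by blast
      qed
    qed
  next
    show "(image Suc) ` S (a#p) w \<union> T \<subseteq> S (a#p) (b#w)"
    proof
      fix I assume "I \<in> (image Suc) ` S (a#p) w \<union> T"
      then consider J where "J \<in> S (a#p) w" "I = Suc ` J"
        | J where "a = b" "J \<in> S p w" "I = insert 0 (Suc ` J)"
        unfolding T_def by (auto split: if_splits)
      then show "I \<in> S (a#p) (b#w)"
      proof cases
        case 1
        have fin: "finite J" using 1 finite_subset[of J "{..<length w}"] by (auto simp: S_def)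
        have JJ: "{j. Suc j \<in> I} = J" using 1 by auto
        have "card I = card J" using 1 by (simp add: card_image)
        then show ?thesis using 1 JJ nths_Cons[of b w I] by (auto simp: S_def card_image)
      next
        case 2
        have fin: "finite J" using 2 finite_subset[of J "{..<length w}"] by (auto simp: S_def)
        have JJ: "{j. Suc j \<in> I} = J" using 2 by auto
        then show ?thesis using 2 JJ fin nths_Cons[of b w I] by (auto simp: S_def card_image)
      qed
    qed
  qed
  have disj: "(image Suc) ` S (a#p) w \<inter> T = {}" unfolding T_def by auto
  have finT: "finite T" unfolding T_def using finS by auto
  have c1: "card ((image Suc) ` S (a#p) w) = card (S (a#p) w)"
    by (rule card_image[OF injS])
  have c2: "card T = (if a = b then card (S p w) else 0)"
  proof -
    have "inj_on (\<lambda>J. insert 0 (Suc ` J)) (S p w)"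
    proof (rule inj_onI)
      fix x y assume "insert 0 (Suc ` x) = insert (0::nat) (Suc ` y)"
      then have "Suc ` x = Suc ` y" by (metis Diff_insert_absorb image_iff nat.distinct(1))
      then show "x = y" by (simp add: inj_image_eq_iff)
    qed
    then show ?thesis unfolding T_def by (simp add: card_image)
  qed
  have "card (S (a#p) (b#w)) = card (S (a#p) w) + (if a = b then card (S p w) else 0)"
    using eq disj finT finS[of "a#p" w] c1 c2 by (simp add: card_Un_disjoint)
  then show ?thesis unfolding occ_def S_def by simp
qed


lemma occ_mono: "occ p w \<le> occ p (b#w)"
  by (cases p) (auto simp: occ_Nil occ_Cons_Cons)

lemma occ_pos: "occ (a#p) w > 0 \<Longrightarrow> occ p w > 0"
proof (induction w)
  case Nil then show ?case by (simp add: occ_Cons_Nil)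
next
  case (Cons b w)
  then show ?case using occ_mono[of p w b] by (auto simp: occ_Cons_Cons split: if_splits)
qed

definition cnt :: "nat \<Rightarrow> (bool list \<Rightarrow> bool) \<Rightarrow> nat" where
  "cnt n P = card {w. length w = n \<and> P w}"

lemma cnt_0: "cnt 0 P = (if P [] then 1 else 0)"
proof -
  have "{w. length w = 0 \<and> P w} = (if P [] then {[]} else {})" by auto
  then show ?thesis unfolding cnt_def by simp
qed

lemma aux1: "(0 < (x::nat) \<Longrightarrow> 0 < y) \<Longrightarrow> (x + y = 1) = (y = 1 \<and> x = 0)"
  by (cases x) auto

lemma occ_same: "occ (c#q) (c#w) = occ (c#q) w + occ q w"
  by (simp add: occ_Cons_Cons)

lemma occ_diff: "a \<noteq> b \<Longrightarrow> occ (a#q) (b#w) = occ (a#q) w"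
  by (simp add: occ_Cons_Cons)

lemma cnt_Suc: "cnt (Suc n) P = cnt n (\<lambda>w. P (c#w)) + cnt n (\<lambda>w. P ((\<not>c)#w))"
proof -
  have fin: "finite {w::bool list. length w = n \<and> Q w}" for Q
    by (rule finite_subset[OF _ finite_lists_length_eq[of "UNIV::bool set" n]]) auto
  have eq: "{w. length w = Suc n \<and> P w} = Cons c ` {w. length w = n \<and> P (c#w)} \<union> Cons (\<not>c) ` {w. length w = n \<and> P ((\<not>c)#w)}"
  proof (rule set_eqI)
    fix x show "x \<in> {w. length w = Suc n \<and> P w} \<longleftrightarrow> x \<in> Cons c ` {w. length w = n \<and> P (c#w)} \<union> Cons (\<not>c) ` {w. length w = n \<and> P ((\<not>c)#w)}"
      by (cases x; cases "hd x = c") auto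
  qed
  show ?thesis unfolding cnt_def eq
    by (subst card_Un_disjoint) (auto simp: fin card_image)
qed

lemma cnt_cong: "(\<And>w. length w = n \<Longrightarrow> P w = Q w) \<Longrightarrow> cnt n P = cnt n Q"
  unfolding cnt_def by (rule arg_cong[where f=card]) auto

definition U :: "bool list \<Rightarrow> nat \<Rightarrow> nat" where "U p n = cnt n (\<lambda>w. occ p w = 1)"
definition V :: "bool \<Rightarrow> bool list \<Rightarrow> nat \<Rightarrow> nat" where
  "V a q n = cnt n (\<lambda>w. occ q w = 1 \<and> occ (a#q) w = 0)"

lemma U_Suc: "U (a#p) (Suc n) = U (a#p) n + V a p n"
proof -
  have "U (a#p) (Suc n) = V a p n + U (a#p) n"
    unfolding U_def V_def cnt_Suc[where c=a]
  proof (intro arg_cong2[where f="(+)"] cnt_cong)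
    fix w show "(occ (a # p) (a # w) = 1) = (occ p w = 1 \<and> occ (a # p) w = 0)"
      unfolding occ_same using aux1[OF occ_pos[of a p w]] by simp
  next
    fix w show "(occ (a # p) ((\<not>a) # w) = 1) = (occ (a#p) w = 1)"
      by (subst occ_diff) auto
  qed
  then show ?thesis by simp
qed

lemma U_0: "U (a#p) 0 = 0"
  unfolding U_def cnt_0 by (simp add: occ_Cons_Nil)

lemma V_Nil: "V a [] n = 1"
proof (induction n)
  case 0 then show ?case unfolding V_def cnt_0 by (simp add: occ_Nil occ_Cons_Nil)
next
  case (Suc n)
  have "V a [] (Suc n) = 0 + V a [] n"
    unfolding V_def cnt_Suc[where c=a]
    by (intro arg_cong2[where f="(+)"]) (auto simp: occ_Nil occ_Cons_Cons cnt_def)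
  then show ?case using Suc by simp
qed

lemma V_0: "V a (c#q) 0 = 0"
  unfolding V_def cnt_0 by (simp add: occ_Cons_Nil)

lemma V_Suc: "V a (c#q) (Suc n) = V c q n + (if a = c then V a (c#q) n else 0)"
  unfolding V_def cnt_Suc[where c=c]
proof (intro arg_cong2[where f="(+)"])
  show "cnt n (\<lambda>w. occ (c # q) (c # w) = 1 \<and> occ (a # c # q) (c # w) = 0) =
    cnt n (\<lambda>w. occ q w = 1 \<and> occ (c # q) w = 0)"
  proof (rule cnt_cong)
    fix w :: "bool list"
    show "(occ (c # q) (c # w) = 1 \<and> occ (a # c # q) (c # w) = 0) = (occ q w = 1 \<and> occ (c # q) w = 0)"
    proof -
      have e: "occ (a # c # q) (c # w) = occ (a # c # q) w + (if a = c then occ (c#q) w else 0)"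
        by (simp add: occ_Cons_Cons)
      show ?thesis unfolding occ_same e using aux1[OF occ_pos[of c q w]] occ_pos[of a "c#q" w]
        by (cases "occ (c#q) w = 0") auto
    qed
  qed
next
  show "cnt n (\<lambda>w. occ (c # q) ((\<not> c) # w) = 1 \<and> occ (a # c # q) ((\<not> c) # w) = 0) =
    (if a = c then cnt n (\<lambda>w. occ (c # q) w = 1 \<and> occ (a # c # q) w = 0) else 0)"
  proof (cases "a = c")
    case True
    have e1: "occ (c # q) ((\<not> c) # w) = occ (c#q) w" for w by (rule occ_diff) auto
    have e2: "occ (a # c # q) ((\<not> c) # w) = occ (a#c#q) w" for w using True by (intro occ_diff) auto
    show ?thesis unfolding e1 e2 using True by simp
  next
    case False
    then have ac: "a = (\<not>c)" by auto
    have e1: "occ (c # q) ((\<not> c) # w) = occ (c#q) w" for w by (rule occ_diff) auto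
    have e2: "occ (a # c # q) ((\<not> c) # w) = occ (a#c#q) w + occ (c#q) w" for w
      unfolding ac by (rule occ_same)
    have "(\<lambda>w. occ (c#q) w = 1 \<and> occ (a#c#q) w + occ (c#q) w = 0) = (\<lambda>w. False)" by auto
    then show ?thesis unfolding e1 e2 using False by (simp add: cnt_def)
  qed
qed

fun bd :: "bool \<Rightarrow> bool list \<Rightarrow> nat" where
  "bd a [] = 0"
| "bd a (c#q) = (if a = c then 0 else 1) + bd c q"

lemma bd_le: "bd a q \<le> length q"
proof (induction q arbitrary: a)
  case (Cons c q)
  have "bd c q \<le> length q" by (rule Cons.IH)
  then show ?case by auto
qed simp

lemma runs_bd: "runs (a#q) = Suc (bd a q)"
  unfolding runs_def by (induction q arbitrary: a) auto

lemma V_closed: "V a q n = (if bd a q \<le> n then (n - bd a q) choose (length q - bd a q) else 0)"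
proof (induction q arbitrary: a n)
  case Nil then show ?case by (simp add: V_Nil)
next
  case (Cons c q)
  have bl: "bd c q \<le> length q" by (rule bd_le)
  show ?case
  proof (induction n)
    case 0 then show ?case by (simp add: V_0)
  next
    case (Suc n)
    show ?case
    proof (cases "a = c")
      case False
      have "V a (c#q) (Suc n) = V c q n" using False by (simp add: V_Suc)
      moreover have "bd a (c#q) = Suc (bd c q)" using False by simp
      ultimately show ?thesis using Cons.IH[of c n] by simp
    next
      case True
      have "V a (c#q) (Suc n) = V c q n + V a (c#q) n" using True by (simp add: V_Suc)
      also have "\<dots> = (if bd c q \<le> Suc n then (Suc n - bd c q) choose (Suc (length q) - bd c q) else 0)"
      proof (cases "bd c q \<le> n")
        case True
        have h1: "V c q n = (n - bd c q) choose (length q - bd c q)" using Cons.IH[of c n] True by simp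
        have bdac: "bd a (c#q) = bd c q" using \<open>a = c\<close> by simp
        have h2: "V a (c#q) n = (n - bd c q) choose Suc (length q - bd c q)"
          using Suc.IH True bl unfolding bdac by (simp add: Suc_diff_le)
        have e1: "Suc n - bd c q = Suc (n - bd c q)" "Suc (length q) - bd c q = Suc (length q - bd c q)"
          using True bl by (simp_all add: Suc_diff_le)
        have "(Suc n - bd c q) choose (Suc (length q) - bd c q) = ((n - bd c q) choose (length q - bd c q)) + ((n - bd c q) choose (Suc (length q - bd c q)))"
          unfolding e1 by (rule binomial_Suc_Suc)
        then show ?thesis using h1 h2 True by simp
      next
        case False
        have h1: "V c q n = 0" using Cons.IH[of c n] False by simp
        have bdac: "bd a (c#q) = bd c q" using \<open>a = c\<close> by simp
        have h2: "V a (c#q) n = 0" using Suc.IH False unfolding bdac by simp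
        have "Suc n - bd c q = 0" using False by simp
        moreover have "Suc (length q) - bd c q > 0" using bl by simp
        ultimately show ?thesis using h1 h2 by simp
      qed
      finally show ?thesis using True by simp
    qed
  qed
qed

lemma U_closed: "U (a#p) n = (n - bd a p) choose (Suc (length p) - bd a p)"
proof (induction n)
  case 0 then show ?case using bd_le[of a p] by (simp add: U_0)
next
  case (Suc n)
  have bl: "bd a p \<le> length p" by (rule bd_le)
  show ?case
  proof (cases "bd a p \<le> n")
    case True
    have e1: "Suc n - bd a p = Suc (n - bd a p)" "Suc (length p) - bd a p = Suc (length p - bd a p)"
      using True bl by auto
    show ?thesis using True Suc.IH bl unfolding U_Suc V_closed by (simp add: e1 Suc_diff_le)
  next
    case False
    then show ?thesis using Suc.IH bl unfolding U_Suc V_closed by auto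
  qed
qed

theorem mainTheorem2:
  fixes p :: "bool list" and n :: nat
  assumes "length p \<ge> 1"
  shows "B n p 1 = (n + 1 - runs p) choose (length p + 1 - runs p)"
proof -
  obtain a q where p: "p = a # q" using assms by (cases p) auto
  have "B n p 1 = U p n" unfolding B_def U_def cnt_def by simp
  then show ?thesis unfolding p U_closed runs_bd by simp
qed

end
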